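(* Let $c>0$, $\varepsilon>0$, $\Delta t,\Delta x>0$, $0\le a_\infty$, and for each $n$ and $j\in\mathbb{Z}$ let $a_{j-\frac12,L}^n, a_{j-\frac12,R}^n \in [-a_\infty, a_\infty]$ be given. Define $$\kappa_{j-\frac12,L}^n = \frac{a_{j-\frac12,L}^n}{1 - \exp\!\big(-a_{j-\frac12,L}^n \Delta x/(\varepsilon c^2)\big)}, \qquad \kappa_{j-\frac12,R}^n = \frac{a_{j-\frac12,R}^n}{1 - \exp\!\big(a_{j-\frac12,R}^n \Delta x/(\varepsilon c^2)\big)}$$ (extended by continuity at $0$), write $D_{j\pm\frac12}^n = c - \kappa_{j\pm\frac12,R}^n + \kappa_{j\pm\frac12,L}^n$ and $\lambda = \frac{c\Delta t}{\Delta x}$, and consider the well-balanced scheme $$\mu_j^{n+1} = (1-\lambda)\mu_j^n - \lambda\frac{c - \kappa_{j+\frac12,R}^n - \kappa_{j+\frac12,L}^n}{D_{j+\frac12}^n}\nu_j^n - 2\lambda\frac{\kappa_{j+\frac12,R}^n}{D_{j+\frac12}^n}\mu_{j+1}^n,$$ $$\nu_j^{n+1} = (1-\lambda)\nu_j^n - \lambda\frac{c + \kappa_{j-\frac12,R}^n + \kappa_{j-\frac12,L}^n}{D_{j-\frac12}^n}\mu_j^n + 2\lambda\frac{\kappa_{j-\frac12,L}^n}{D_{j-\frac12}^n}\nu_{j-1}^n.$$ Under the CFL condition $\frac{c\Delta t}{\Delta x} \le 1$ and the subcharacteristic condition $c \ge a_\infty$, for every $n\in\mathbb{N}$ (with $(\mu^n,\nu^n)\in\ell^1(\mathbb{Z})^2$)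 $$\sum_{j\in\mathbb{Z}}\big(|\mu_j^{n+1}| + |\nu_j^{n+1}|\big) \leq \sum_{j\in\mathbb{Z}}\big(|\mu_j^{n}| + |\nu_j^{n}|\big).$$
   Context: The unknowns are $\mu_j^n = \sigma_j^n - c\rho_j^n$, $\nu_j^n = \sigma_j^n + c\rho_j^n$, approximations of the relaxation system $\partial_t\rho + \partial_x\sigma = 0$, $\partial_t\sigma + c^2\partial_x\rho = \frac1\varepsilon(a[\rho]\rho - \sigma)$ on the grid $x_j = j\Delta x$, $t^n = n\Delta t$. In the paper the interface velocities $a_{j-\frac12,L/R}^n$ are computed by a fixed-point procedure from an $a_\infty$-Lipschitz interaction potential, which guarantees $|a_{j-\frac12,L/R}^n|\le a_\infty$. *)

theory Defs
  imports "HOL-Analysis.Analysis"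
begin

definition kappaL :: "real \<Rightarrow> real \<Rightarrow> real \<Rightarrow> real \<Rightarrow> real" where
  "kappaL eps c dx a =
     (if a = 0 then eps * c^2 / dx else a / (1 - exp (- a * dx / (eps * c^2))))"

definition kappaR :: "real \<Rightarrow> real \<Rightarrow> real \<Rightarrow> real \<Rightarrow> real" where
  "kappaR eps c dx a =
     (if a = 0 then - (eps * c^2 / dx) else a / (1 - exp (a * dx / (eps * c^2))))"

end

theory Submission
  imports Defs
begin

lemma bij_shift: "bij_betw (\<lambda>j::int. j + k) UNIV UNIV"
  by (rule bij_betwI[where g="\<lambda>j. j - k"]) auto

lemma shift_summable: "f summable_on UNIV \<Longrightarrow> (\<lambda>j::int. f (j + k)) summable_on UNIV"
  using summable_on_reindex_bij_betw[OF bij_shift, of f k] by simp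

lemma shift_infsum: "infsum (\<lambda>j::int. f (j + k)) UNIV = infsum f UNIV"
  using infsum_reindex_bij_betw[OF bij_shift, of f k] by simp

lemma l1_abstract:
  fixes P Q A B C E M N :: "int \<Rightarrow> real" and l :: real
  assumes P0: "\<And>j. P j \<ge> 0" and Q0: "\<And>j. Q j \<ge> 0"
    and Ps: "P summable_on UNIV" and Qs: "Q summable_on UNIV"
    and A0: "\<And>k. A k \<ge> 0" and B0: "\<And>k. B k \<ge> 0" and C0: "\<And>k. C k \<ge> 0" and E0: "\<And>k. E k \<ge> 0"
    and AE: "\<And>k. A k + E k = 1" and BC: "\<And>k. B k + C k = 1"
    and l0: "0 \<le> l" and l1: "l \<le> 1"
    and M: "\<And>j. \<bar>M j\<bar> \<le> (1-l) * P j + l * A (j+1) * Q j + l * B (j+1) * P (j+1)"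
    and N: "\<And>j. \<bar>N j\<bar> \<le> (1-l) * Q j + l * C j * P j + l * E j * Q (j-1)"
  shows "(\<lambda>j. \<bar>M j\<bar> + \<bar>N j\<bar>) summable_on UNIV
    \<and> (\<Sum>\<^sub>\<infinity>j. \<bar>M j\<bar> + \<bar>N j\<bar>) \<le> (\<Sum>\<^sub>\<infinity>j. P j + Q j)"
proof -
  have A1: "A k \<le> 1" for k using AE[of k] E0[of k] by linarith
  have B1: "B k \<le> 1" for k using BC[of k] C0[of k] by linarith
  have C1: "C k \<le> 1" for k using BC[of k] B0[of k] by linarith
  have E1: "E k \<le> 1" for k using AE[of k] A0[of k] by linarith
  have P1s: "(\<lambda>j. P (j+1)) summable_on UNIV" using shift_summable[OF Ps] .
  have Qms: "(\<lambda>j. Q (j+(-1))) summable_on UNIV" using shift_summable[OF Qs] .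
  have Qm: "(\<lambda>j. Q (j-1)) summable_on UNIV" using Qms by simp
  define f1 where "f1 j = A (j+1) * Q j" for j
  define f2 where "f2 j = B (j+1) * P (j+1)" for j
  define f3 where "f3 j = C j * P j" for j
  define f4 where "f4 j = E j * Q (j-1)" for j
  have s1: "f1 summable_on UNIV"
    by (rule summable_on_comparison_test[OF Qs]) (auto simp: f1_def intro!: mult_left_le_one_le mult_nonneg_nonneg A0 Q0 A1)
  have s2: "f2 summable_on UNIV"
    by (rule summable_on_comparison_test[OF P1s]) (auto simp: f2_def intro!: mult_left_le_one_le mult_nonneg_nonneg B0 P0 B1)
  have s3: "f3 summable_on UNIV"
    by (rule summable_on_comparison_test[OF Ps]) (auto simp: f3_def intro!: mult_left_le_one_le mult_nonneg_nonneg C0 P0 C1)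
  have s4: "f4 summable_on UNIV"
    by (rule summable_on_comparison_test[OF Qm]) (auto simp: f4_def intro!: mult_left_le_one_le mult_nonneg_nonneg E0 Q0 E1)
  define G where "G j = (1-l) * (P j + Q j) + l * (f1 j + f2 j + f3 j + f4 j)" for j
  have PQs: "(\<lambda>j. P j + Q j) summable_on UNIV" using summable_on_add[OF Ps Qs] .
  have Fs: "(\<lambda>j. f1 j + f2 j + f3 j + f4 j) summable_on UNIV"
    using summable_on_add[OF summable_on_add[OF summable_on_add[OF s1 s2] s3] s4] .
  have Gs: "G summable_on UNIV"
    unfolding G_def using summable_on_add[OF summable_on_cmult_right[OF PQs] summable_on_cmult_right[OF Fs]] .
  have Gb: "\<bar>M j\<bar> + \<bar>N j\<bar> \<le> G j" for j
    using M[of j] N[of j] by (simp add: G_def f1_def f2_def f3_def f4_def algebra_simps)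
  have sMN: "(\<lambda>j. \<bar>M j\<bar> + \<bar>N j\<bar>) summable_on UNIV"
    by (rule summable_on_comparison_test[OF Gs Gb]) simp
  have i2: "infsum f2 UNIV = (\<Sum>\<^sub>\<infinity>j. B j * P j)"
    unfolding f2_def using shift_infsum[of "\<lambda>j. B j * P j" 1] by simp
  have i4: "infsum f4 UNIV = (\<Sum>\<^sub>\<infinity>j. E (j+1) * Q j)"
    unfolding f4_def using shift_infsum[of "\<lambda>j. E (j+1) * Q j" "-1"] by simp
  have s2': "(\<lambda>j. B j * P j) summable_on UNIV"
    by (rule summable_on_comparison_test[OF Ps]) (auto intro!: mult_left_le_one_le mult_nonneg_nonneg B0 P0 B1)
  have s4': "(\<lambda>j. E (j+1) * Q j) summable_on UNIV"
    by (rule summable_on_comparison_test[OF Qs]) (auto intro!: mult_left_le_one_le mult_nonneg_nonneg E0 Q0 E1)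
  have "infsum f2 UNIV + infsum f3 UNIV = (\<Sum>\<^sub>\<infinity>j. B j * P j + C j * P j)"
    using i2 infsum_add[OF s2' s3[unfolded f3_def]] by (simp add: f3_def[abs_def])
  also have "\<dots> = infsum P UNIV" by (simp add: BC flip: distrib_right)
  finally have e23: "infsum f2 UNIV + infsum f3 UNIV = infsum P UNIV" .
  have "infsum f1 UNIV + infsum f4 UNIV = (\<Sum>\<^sub>\<infinity>j. A (j+1) * Q j + E (j+1) * Q j)"
    using i4 infsum_add[OF s1[unfolded f1_def] s4'] by (simp add: f1_def[abs_def])
  also have "\<dots> = infsum Q UNIV" by (simp add: AE flip: distrib_right)
  finally have e14: "infsum f1 UNIV + infsum f4 UNIV = infsum Q UNIV" .
  have iF: "(\<Sum>\<^sub>\<infinity>j. f1 j + f2 j + f3 j + f4 j) = infsum P UNIV + infsum Q UNIV"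
    using infsum_add[OF summable_on_add[OF summable_on_add[OF s1 s2] s3] s4]
      infsum_add[OF summable_on_add[OF s1 s2] s3] infsum_add[OF s1 s2] e23 e14 by linarith
  have iPQ: "(\<Sum>\<^sub>\<infinity>j. P j + Q j) = infsum P UNIV + infsum Q UNIV" using infsum_add[OF Ps Qs] .
  have "infsum G UNIV = (1-l) * (\<Sum>\<^sub>\<infinity>j. P j + Q j) + l * (\<Sum>\<^sub>\<infinity>j. f1 j + f2 j + f3 j + f4 j)"
    unfolding G_def
    using infsum_add[OF summable_on_cmult_right[OF PQs] summable_on_cmult_right[OF Fs]]
      infsum_cmult_right[OF PQs, of "1-l"] infsum_cmult_right[OF Fs, of l] by simp
  also have "\<dots> = (\<Sum>\<^sub>\<infinity>j. P j + Q j)" using iF iPQ by (simp add: algebra_simps)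
  finally have "infsum G UNIV = (\<Sum>\<^sub>\<infinity>j. P j + Q j)" .
  moreover have "(\<Sum>\<^sub>\<infinity>j. \<bar>M j\<bar> + \<bar>N j\<bar>) \<le> infsum G UNIV"
    by (rule infsum_mono[OF sMN Gs Gb])
  ultimately show ?thesis using sMN by simp
qed

definition hh :: "real \<Rightarrow> real" where
  "hh t = (if t = 0 then 1 else (exp t - 1) / t)"

lemma hh_pos: "hh t > 0"
proof (cases "t = 0")
  case False
  show ?thesis
  proof (cases "t > 0")
    case True then show ?thesis using False by (simp add: hh_def)
  next
    case False2: False
    then have "t < 0" using False by simp
    then have "exp t < 1" by simp
    then show ?thesis using \<open>t < 0\<close> by (simp add: hh_def divide_neg_neg)
  qed
qed (simp add: hh_def)

lemma hh_ge1: "t > 0 \<Longrightarrow> hh t \<ge> 1"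
proof -
  assume "t > 0"
  have "t \<le> exp t - 1" using exp_ge_add_one_self[of t] by linarith
  then show ?thesis using \<open>t > 0\<close> by (simp add: hh_def)
qed

lemma hh_le1: "t < 0 \<Longrightarrow> hh t \<le> 1"
proof -
  assume "t < 0"
  have "t \<le> exp t - 1" using exp_ge_add_one_self[of t] by linarith
  then show ?thesis using \<open>t < 0\<close> by (simp add: hh_def divide_le_eq)
qed

lemma hh_mono_lt: assumes "t < u" shows "hh t \<le> hh u"
proof -
  note cv = convex_on_slope_le[OF exp_convex, simplified]
  consider "t < u" "u < 0" | "u = 0" | "t < 0" "0 < u" | "t = 0" | "0 < t" "t < u"
    using assms by linarith
  then show ?thesis
  proof cases
    case 1
    have "(exp t - exp 0) / (t - 0) \<le> (exp u - exp 0) / (u - 0)"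
      using cv(2)[of t u 0] 1 by simp
    then show ?thesis using 1 assms by (simp add: hh_def)
  next
    case 2 then show ?thesis using hh_le1[of t] assms by (simp add: hh_def)
  next
    case 3
    have "(exp t - exp 0) / (t - 0) \<le> (exp t - exp u) / (t - u)"
      using cv(1)[of t 0 u] 3 by simp
    also have "\<dots> \<le> (exp 0 - exp u) / (0 - u)"
      using cv(2)[of t 0 u] 3 by simp
    also have "\<dots> = (exp u - 1) / u" using 3 by (simp add: field_simps)
    finally show ?thesis using 3 by (simp add: hh_def)
  next
    case 4 then show ?thesis using hh_ge1[of u] assms by (simp add: hh_def)
  next
    case 5
    have "(exp 0 - exp t) / (0 - t) \<le> (exp 0 - exp u) / (0 - u)"
      using cv(1)[of 0 t u] 5 by simp
    moreover have "(exp 0 - exp t) / (0 - t) = (exp t - 1) / t" "(exp 0 - exp u) / (0 - u) = (exp u - 1) / u"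
      using 5 by (simp_all add: field_simps)
    ultimately show ?thesis using 5 by (simp add: hh_def)
  qed
qed

lemma hh_mono: "t \<le> u \<Longrightarrow> hh t \<le> hh u"
  using hh_mono_lt[of t u] by (cases "t = u") auto

lemma alg3: "(E::real) \<noteq> 1 \<Longrightarrow> s / ((E - 1) / (- t)) = s * t / (1 - E)"
proof -
  assume "E \<noteq> 1"
  then have d: "E - 1 \<noteq> 0" "1 - E \<noteq> 0" by auto
  have "s / ((E - 1) / (- t)) = - (s * t) / (E - 1)" by simp
  also have "\<dots> = s * t / (- (E - 1))" by (simp only: minus_divide_left[symmetric] minus_divide_right[symmetric])
  also have "\<dots> = s * t / (1 - E)" by simp
  finally show ?thesis .
qed

lemma alg4: "(E::real) \<noteq> 1 \<Longrightarrow> - s / ((E - 1) / t) = s * t / (1 - E)"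
proof -
  assume "E \<noteq> 1"
  then have d: "E - 1 \<noteq> 0" "1 - E \<noteq> 0" by auto
  have "- s / ((E - 1) / t) = - (s * t) / (E - 1)" by simp
  also have "\<dots> = s * t / (- (E - 1))" by (simp only: minus_divide_left[symmetric] minus_divide_right[symmetric])
  also have "\<dots> = s * t / (1 - E)" by simp
  finally show ?thesis .
qed

lemma kappaL_hh: assumes "s = eps * c^2 / dx" "s > 0" "eps > 0" "c > 0" "dx > 0"
  shows "kappaL eps c dx a = s / hh (- a / s)"
proof (cases "a = 0")
  case False
  have e: "a * dx / (eps * c^2) = a / s" using assms by (simp add: field_simps)
  have ne: "exp (- (a/s)) \<noteq> 1" using False assms by simp
  have as: "a = s * (a / s)" using assms by simp
  have "kappaL eps c dx a = a / (1 - exp (- (a/s)))" using False by (simp add: kappaL_def e)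
  also have "\<dots> = s * (a/s) / (1 - exp (- (a/s)))" using as by simp
  also have "\<dots> = s / ((exp (- (a/s)) - 1) / (- (a/s)))" using alg3[OF ne, of s "a/s"] by simp
  also have "\<dots> = s / hh (- a / s)" using False assms(2) by (simp add: hh_def)
  finally show ?thesis .
qed (simp add: kappaL_def hh_def assms)

lemma kappaR_hh: assumes "s = eps * c^2 / dx" "s > 0" "eps > 0" "c > 0" "dx > 0"
  shows "kappaR eps c dx a = - s / hh (a / s)"
proof (cases "a = 0")
  case False
  have e: "a * dx / (eps * c^2) = a / s" using assms by (simp add: field_simps)
  have ne: "exp (a/s) \<noteq> 1" using False assms by simp
  have as: "a = s * (a / s)" using assms by simp
  have "kappaR eps c dx a = a / (1 - exp (a/s))" using False by (simp add: kappaR_def e)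
  also have "\<dots> = s * (a/s) / (1 - exp (a/s))" using as by simp
  also have "\<dots> = - s / ((exp (a/s) - 1) / (a/s))" using alg4[OF ne, of s "a/s"] by simp
  also have "\<dots> = - s / hh (a / s)" using False assms(2) by (simp add: hh_def)
  finally show ?thesis .
qed (simp add: kappaR_def hh_def assms)

lemma alg1: "(E::real) > 0 \<Longrightarrow> t \<noteq> 0 \<Longrightarrow> (inverse E - 1) / (- t) = (E - 1) / (t * E)"
  by (simp add: field_simps)

lemma alg2: "(E::real) > 0 \<Longrightarrow> E \<noteq> 1 \<Longrightarrow> t \<noteq> 0 \<Longrightarrow> s / ((E - 1) / (t * E)) - s / ((E - 1) / t) = s * t"
proof -
  assume a: "E > 0" "E \<noteq> 1" "t \<noteq> 0"
  then have d: "E - 1 \<noteq> 0" by simp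
  have "s / ((E - 1) / (t * E)) = s * t * E / (E - 1)" by simp
  moreover have "s / ((E - 1) / t) = s * t / (E - 1)" by simp
  moreover have "s * t * E / (E - 1) - s * t / (E - 1) = s * t * (E - 1) / (E - 1)"
    by (simp add: diff_divide_distrib[symmetric] right_diff_distrib)
  ultimately show ?thesis using d by simp
qed

lemma hh_sum: assumes "s > 0" shows "s / hh (- a / s) - s / hh (a / s) = a"
proof (cases "a = 0")
  case False
  define t where "t = a / s"
  have t0: "t \<noteq> 0" using False assms by (simp add: t_def)
  have a: "a = s * t" using assms by (simp add: t_def)
  have ne: "exp t \<noteq> 1" using t0 by simp
  have h1: "hh (-t) = (exp t - 1) / (t * exp t)"
    using t0 alg1[of "exp t" t] by (simp add: hh_def exp_minus)
  have h2: "hh t = (exp t - 1) / t" using t0 by (simp add: hh_def)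
  have calc: "s / hh (- t) - s / hh t = s * t"
    unfolding h1 h2 using alg2[of "exp t" t s] t0 ne by simp
  have mt: "- a / s = - t" by (simp add: t_def)
  have pt: "a / s = t" by (simp add: t_def)
  have st: "s * t = a" using assms by (simp add: t_def)
  show ?thesis unfolding mt pt using calc st by linarith
qed (simp add: hh_def)


theorem lemma3:
  fixes c eps dt dx ainf :: real
    and aL aR :: "nat \<Rightarrow> int \<Rightarrow> real"
    and mu nu :: "nat \<Rightarrow> int \<Rightarrow> real"
    and n :: nat
  assumes c_pos: "c > 0" and eps_pos: "eps > 0" and dt_pos: "dt > 0" and dx_pos: "dx > 0"
    and ainf_nonneg: "0 \<le> ainf"
    and aL_bnd: "\<And>m j. \<bar>aL m j\<bar> \<le> ainf"
    and aR_bnd: "\<And>m j. \<bar>aR m j\<bar> \<le> ainf"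
    and CFL: "c * dt / dx \<le> 1"
    and subchar: "c \<ge> ainf"
    and mu_step: "\<And>m j.
      mu (Suc m) j =
        (1 - c * dt / dx) * mu m j
        - (c * dt / dx) * ((c - kappaR eps c dx (aR m (j+1)) - kappaL eps c dx (aL m (j+1)))
             / (c - kappaR eps c dx (aR m (j+1)) + kappaL eps c dx (aL m (j+1)))) * nu m j
        - 2 * (c * dt / dx) * (kappaR eps c dx (aR m (j+1))
             / (c - kappaR eps c dx (aR m (j+1)) + kappaL eps c dx (aL m (j+1)))) * mu m (j+1)"
    and nu_step: "\<And>m j.
      nu (Suc m) j =
        (1 - c * dt / dx) * nu m j
        - (c * dt / dx) * ((c + kappaR eps c dx (aR m j) + kappaL eps c dx (aL m j))
             / (c - kappaR eps c dx (aR m j) + kappaL eps c dx (aL m j))) * mu m j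
        + 2 * (c * dt / dx) * (kappaL eps c dx (aL m j)
             / (c - kappaR eps c dx (aR m j) + kappaL eps c dx (aL m j))) * nu m (j-1)"
    and mu_l1: "(\<lambda>j. \<bar>mu n j\<bar>) summable_on UNIV"
    and nu_l1: "(\<lambda>j. \<bar>nu n j\<bar>) summable_on UNIV"
  shows "(\<lambda>j. \<bar>mu (Suc n) j\<bar> + \<bar>nu (Suc n) j\<bar>) summable_on UNIV
    \<and> (\<Sum>\<^sub>\<infinity>j. \<bar>mu (Suc n) j\<bar> + \<bar>nu (Suc n) j\<bar>)
        \<le> (\<Sum>\<^sub>\<infinity>j. \<bar>mu n j\<bar> + \<bar>nu n j\<bar>)"
proof -
  define s where "s = eps * c^2 / dx"
  have s0: "s > 0" using c_pos eps_pos dx_pos by (simp add: s_def)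
  define l where "l = c * dt / dx"
  have l0: "0 \<le> l" using c_pos dt_pos dx_pos by (simp add: l_def)
  have l1: "l \<le> 1" using CFL by (simp add: l_def)
  define kL where "kL k = kappaL eps c dx (aL n k)" for k
  define kR where "kR k = kappaR eps c dx (aR n k)" for k
  define D where "D k = c - kR k + kL k" for k
  have kLh: "kL k = s / hh (- aL n k / s)" for k
    unfolding kL_def by (rule kappaL_hh[OF s_def s0 eps_pos c_pos dx_pos])
  have kRh: "kR k = - s / hh (aR n k / s)" for k
    unfolding kR_def by (rule kappaR_hh[OF s_def s0 eps_pos c_pos dx_pos])
  have kLp: "kL k > 0" for k unfolding kLh using s0 hh_pos by simp
  have kRn: "kR k < 0" for k unfolding kRh using s0 hh_pos by (simp add: divide_neg_pos)
  have Dp: "D k > 0" for k unfolding D_def using kLp[of k] kRn[of k] c_pos by linarith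
  have up: "kL k + kR k \<le> c" for k
  proof -
    have h1: "hh (- ainf / s) \<le> hh (- aL n k / s)"
      using aL_bnd[of n k] s0 by (intro hh_mono) (simp add: divide_right_mono)
    have h2: "hh (aR n k / s) \<le> hh (ainf / s)"
      using aR_bnd[of n k] s0 by (intro hh_mono) (simp add: divide_right_mono)
    have "kL k \<le> s / hh (- ainf / s)"
      unfolding kLh using h1 s0 hh_pos by (intro divide_left_mono) auto
    moreover have "s / hh (ainf / s) \<le> s / hh (aR n k / s)"
      using h2 s0 hh_pos by (intro divide_left_mono) auto
    moreover have "s / hh (- ainf / s) - s / hh (ainf / s) = ainf" by (rule hh_sum[OF s0])
    ultimately show ?thesis using subchar unfolding kRh by simp
  qed
  have lo: "- c \<le> kL k + kR k" for k
  proof -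
    have "- aL n k \<le> ainf" using aL_bnd[of n k] by linarith
    then have "- aL n k / s \<le> ainf / s" using s0 by (intro divide_right_mono) auto
    then have h1: "hh (- aL n k / s) \<le> hh (ainf / s)" by (rule hh_mono)
    have "- ainf \<le> aR n k" using aR_bnd[of n k] by linarith
    then have "- ainf / s \<le> aR n k / s" using s0 by (intro divide_right_mono) auto
    then have h2: "hh (- ainf / s) \<le> hh (aR n k / s)" by (rule hh_mono)
    have "s / hh (ainf / s) \<le> kL k"
      unfolding kLh using h1 s0 hh_pos by (intro divide_left_mono) auto
    moreover have "s / hh (aR n k / s) \<le> s / hh (- ainf / s)"
      using h2 s0 hh_pos by (intro divide_left_mono) auto
    moreover have "s / hh (- (- ainf) / s) - s / hh (- ainf / s) = - ainf" by (rule hh_sum[OF s0])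
    ultimately show ?thesis using subchar unfolding kRh by simp
  qed
  define A where "A k = (c - kR k - kL k) / D k" for k
  define B where "B k = - 2 * kR k / D k" for k
  define C where "C k = (c + kR k + kL k) / D k" for k
  define E where "E k = 2 * kL k / D k" for k
  have A0: "A k \<ge> 0" for k unfolding A_def using up[of k] Dp[of k] by simp
  have B0: "B k \<ge> 0" for k unfolding B_def using kRn[of k] Dp[of k] by (simp add: divide_nonpos_pos)
  have C0: "C k \<ge> 0" for k unfolding C_def using lo[of k] Dp[of k] by simp
  have E0: "E k \<ge> 0" for k unfolding E_def using kLp[of k] Dp[of k] by simp
  have AE: "A k + E k = 1" for k
  proof -
    have "A k + E k = (c - kR k - kL k + 2 * kL k) / D k" unfolding A_def E_def by (simp only: add_divide_distrib)
    also have "\<dots> = D k / D k" by (simp add: D_def)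
    finally show ?thesis using Dp[of k] by simp
  qed
  have BC: "B k + C k = 1" for k
  proof -
    have "B k + C k = (- 2 * kR k + (c + kR k + kL k)) / D k" unfolding B_def C_def by (simp only: add_divide_distrib)
    also have "\<dots> = D k / D k" by (simp add: D_def)
    finally show ?thesis using Dp[of k] by simp
  qed
  have tri1: "\<bar>x * p - y * q - z * r\<bar> \<le> x * \<bar>p\<bar> + y * \<bar>q\<bar> + (- z) * \<bar>r\<bar>"
    if "x \<ge> 0" "y \<ge> 0" "z \<le> 0" for x y z p q r :: real
  proof -
    have "\<bar>x * p - y * q - z * r\<bar> \<le> \<bar>x * p\<bar> + \<bar>y * q\<bar> + \<bar>z * r\<bar>" by linarith
    also have "\<dots> = x * \<bar>p\<bar> + y * \<bar>q\<bar> + (- z) * \<bar>r\<bar>" using that by (simp add: abs_mult)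
    finally show ?thesis .
  qed
  have tri2: "\<bar>x * p - y * q + z * r\<bar> \<le> x * \<bar>p\<bar> + y * \<bar>q\<bar> + z * \<bar>r\<bar>"
    if "x \<ge> 0" "y \<ge> 0" "z \<ge> 0" for x y z p q r :: real
  proof -
    have "\<bar>x * p - y * q + z * r\<bar> \<le> \<bar>x * p\<bar> + \<bar>y * q\<bar> + \<bar>z * r\<bar>" by linarith
    also have "\<dots> = x * \<bar>p\<bar> + y * \<bar>q\<bar> + z * \<bar>r\<bar>" using that by (simp add: abs_mult)
    finally show ?thesis .
  qed
  have Mb: "\<bar>mu (Suc n) j\<bar> \<le> (1-l) * \<bar>mu n j\<bar> + l * A (j+1) * \<bar>nu n j\<bar> + l * B (j+1) * \<bar>mu n (j+1)\<bar>" for j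
  proof -
    have eq: "mu (Suc n) j = (1-l) * mu n j - (l * A (j+1)) * nu n j - (2 * l * (kR (j+1) / D (j+1))) * mu n (j+1)"
      using mu_step[of n j] unfolding l_def A_def D_def kL_def kR_def by simp
    have z: "2 * l * (kR (j+1) / D (j+1)) \<le> 0"
      using l0 kRn[of "j+1"] Dp[of "j+1"] by (simp add: mult_nonneg_nonpos divide_nonpos_pos)
    have "\<bar>mu (Suc n) j\<bar> \<le> (1-l) * \<bar>mu n j\<bar> + (l * A (j+1)) * \<bar>nu n j\<bar> + (- (2 * l * (kR (j+1) / D (j+1)))) * \<bar>mu n (j+1)\<bar>"
      unfolding eq using l1 l0 A0[of "j+1"] z by (intro tri1) auto
    moreover have eqB: "- (2 * l * (kR (j+1) / D (j+1))) = l * B (j+1)" by (simp add: B_def)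
    ultimately show ?thesis by (simp only: eqB)
  qed
  have Nb: "\<bar>nu (Suc n) j\<bar> \<le> (1-l) * \<bar>nu n j\<bar> + l * C j * \<bar>mu n j\<bar> + l * E j * \<bar>nu n (j-1)\<bar>" for j
  proof -
    have eq: "nu (Suc n) j = (1-l) * nu n j - (l * C j) * mu n j + (l * E j) * nu n (j-1)"
      using nu_step[of n j] unfolding l_def C_def E_def D_def kL_def kR_def by simp
    show ?thesis
      unfolding eq using l1 l0 C0[of j] E0[of j] by (intro tri2) auto
  qed
  show ?thesis
    by (rule l1_abstract[where P="\<lambda>j. \<bar>mu n j\<bar>" and Q="\<lambda>j. \<bar>nu n j\<bar>" and A=A and B=B and C=C and E=E and l=l])
       (use mu_l1 nu_l1 A0 B0 C0 E0 AE BC l0 l1 Mb Nb in \<open>auto simp: algebra_simps\<close>)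
qed


end
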